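(* Let $q$ be odd and $k,\ell\ge0$. If $\mathcal S_q$ is nonempty, then $D_k(a)=D_\ell(a)$ for all $a\in\mathcal S_q$ iff $k\equiv\pm\ell\pmod{q-1}$. Also, $D_k(b)=D_\ell(b)$ for all $b\in\mathcal N_q$ iff $k\equiv\pm\ell\pmod{q+1}$.
   Context: $D_k\in\mathbb Z[x]$: $D_0=2$, $D_1=x$, $D_{k+2}=xD_{k+1}-D_k$, viewed as functions on ${\mathbb F}_q$. $\mathcal S_q=\{a\in{\mathbb F}_q:a^2-4\text{ is a nonzero square in }{\mathbb F}_q\}$, $\mathcal N_q=\{a\in{\mathbb F}_q:a^2-4\text{ is a nonsquare in }{\mathbb F}_q\}$. *)

theory Defs
  imports Main "HOL-Library.Cardinality" "HOL-Number_Theory.Cong"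
begin

fun dickson :: "nat \<Rightarrow> 'a::comm_ring_1 \<Rightarrow> 'a" where
  "dickson 0 x = 2"
| "dickson (Suc 0) x = x"
| "dickson (Suc (Suc k)) x = x * dickson (Suc k) x - dickson k x"

definition S_set :: "'a::{field,finite} set" where
  "S_set = {a. \<exists>b. b \<noteq> 0 \<and> a ^ 2 - 4 = b ^ 2}"

definition N_set :: "'a::{field,finite} set" where
  "N_set = {a. \<not> (\<exists>b. a ^ 2 - 4 = b ^ 2)}"

end

theory Submission imports Defs "HOL-Algebra.Multiplicative_Group" "HOL-Number_Theory.Residues"
begin


definition nsq :: "'a::comm_ring_1" where "nsq = (SOME d. \<forall>b. d \<noteq> b^2)"

datatype 'a qext = Ext (re: 'a) (im: 'a)

instantiation qext :: (comm_ring_1) comm_ring_1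
begin
definition "0 = Ext 0 0"
definition "1 = Ext 1 0"
definition "z + w = Ext (re z + re w) (im z + im w)"
definition "z - w = Ext (re z - re w) (im z - im w)"
definition "- z = Ext (- re z) (- im z)"
definition "z * w = Ext (re z * re w + nsq * im z * im w) (re z * im w + im z * re w)"
instance
  by standard (auto simp: zero_qext_def one_qext_def plus_qext_def minus_qext_def uminus_qext_def times_qext_def algebra_simps intro: qext.expand)
end

instance qext :: (finite) finite
proof
  have "(UNIV :: 'a qext set) = (\<lambda>(x,y). Ext x y) ` UNIV"
    by (auto intro: qext.expand) (metis qext.collapse rangeI case_prod_conv)
  moreover have "finite (range (\<lambda>(x::'a,y::'a). Ext x y))" by (rule finite_imageI) simp
  ultimately show "finite (UNIV :: 'a qext set)" by metis
qed

lemma card_qext: "CARD('a::finite qext) = CARD('a) * CARD('a)"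
proof -
  have "(UNIV :: 'a qext set) = (\<lambda>(x,y). Ext x y) ` UNIV"
    by (auto intro: qext.expand) (metis qext.collapse rangeI case_prod_conv)
  moreover have "inj (\<lambda>(x::'a,y). Ext x y)" by (auto simp: inj_def)
  ultimately show ?thesis by (metis card_image card_cartesian_product UNIV_Times_UNIV)
qed


lemma re_plus [simp]: "re (z + w) = re z + re w" by (simp add: plus_qext_def)
lemma im_plus [simp]: "im (z + w) = im z + im w" by (simp add: plus_qext_def)
lemma re_minus [simp]: "re (z - w) = re z - re w" by (simp add: minus_qext_def)
lemma im_minus [simp]: "im (z - w) = im z - im w" by (simp add: minus_qext_def)
lemma re_uminus [simp]: "re (- z) = - re z" by (simp add: uminus_qext_def)
lemma im_uminus [simp]: "im (- z) = - im z" by (simp add: uminus_qext_def)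
lemma re_times [simp]: "re (z * w) = re z * re w + nsq * im z * im w" by (simp add: times_qext_def)
lemma im_times [simp]: "im (z * w) = re z * im w + im z * re w" by (simp add: times_qext_def)
lemma re_one [simp]: "re (1::'a::comm_ring_1 qext) = 1" by (simp add: one_qext_def)
lemma im_one [simp]: "im (1::'a::comm_ring_1 qext) = 0" by (simp add: one_qext_def)
lemma re_zero [simp]: "re (0::'a::comm_ring_1 qext) = 0" by (simp add: zero_qext_def)
lemma im_zero [simp]: "im (0::'a::comm_ring_1 qext) = 0" by (simp add: zero_qext_def)
lemma re_two [simp]: "re (2::'a::comm_ring_1 qext) = 2"
  by (metis one_add_one re_plus re_one)
lemma im_two [simp]: "im (2::'a::comm_ring_1 qext) = 0"
  by (metis one_add_one im_plus im_one add_0)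
lemma qext_eq_iff: "z = w \<longleftrightarrow> re z = re w \<and> im z = im w"
  by (auto intro: qext.expand)

lemma emb_power: "(Ext (x::'a::comm_ring_1) 0)^n = Ext (x^n) 0"
  by (induction n) (simp_all add: qext_eq_iff)

lemma dickson_emb:
  fixes a :: "'a::comm_ring_1"
  shows "dickson k (Ext a 0) = Ext (dickson k a) 0"
proof -
  have "dickson k (Ext a 0) = Ext (dickson k a) 0 \<and> dickson (Suc k) (Ext a 0) = Ext (dickson (Suc k) a) 0"
  proof (induction k)
    case 0 then show ?case by (simp add: qext_eq_iff)
  next
    case (Suc k) then show ?case by (simp add: qext_eq_iff)
  qed
  thus ?thesis by simp
qed

definition nrm :: "'a::comm_ring_1 qext \<Rightarrow> 'a" where "nrm z = re z ^ 2 - nsq * im z ^ 2"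

lemma nrm_mult: "nrm (z * w) = nrm z * nrm w"
  by (simp add: nrm_def power2_eq_square algebra_simps)

lemma nrm_one [simp]: "nrm 1 = 1" by (simp add: nrm_def)

lemma nrm_power: "nrm (z ^ n) = nrm z ^ n"
  by (induction n) (simp_all add: nrm_mult)

lemma conj_mult: "z * Ext (re z) (- im z) = Ext (nrm z) 0"
  by (simp add: qext_eq_iff nrm_def power2_eq_square algebra_simps)


lemma dickson_uv:
  fixes u v :: "'b::comm_ring_1"
  assumes "u * v = 1"
  shows "dickson k (u + v) = u^k + v^k"
proof -
  have "dickson k (u + v) = u^k + v^k \<and> dickson (Suc k) (u + v) = u^Suc k + v^Suc k"
  proof (induction k)
    case 0 then show ?case by simp
  next
    case (Suc k)
    have "dickson (Suc (Suc k)) (u+v) = (u+v) * (u^Suc k + v^Suc k) - (u^k + v^k)"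
      using Suc by simp
    also have "\<dots> = u^Suc (Suc k) + v^Suc(Suc k) + (u*v) * (u^k + v^k) - (u^k + v^k)"
      by (simp add: algebra_simps)
    also have "\<dots> = u^Suc (Suc k) + v^Suc(Suc k)" using assms by simp
    finally show ?case using Suc by simp
  qed
  thus ?thesis by simp
qed

lemma pow_mod_eq:
  fixes x :: "'b::comm_ring_1"
  assumes "x^m = 1"
  shows "x^k = x^(k mod m)"
proof -
  have "x^k = (x^m)^(k div m) * x^(k mod m)"
    by (metis div_mult_mod_eq mult.commute power_add power_mult)
  thus ?thesis using assms by simp
qed

lemma cong_minus_iff_dvd:
  "[int k = - int l] (mod int m) \<longleftrightarrow> m dvd (k + l)"
proof -
  have "[int k = - int l] (mod int m) \<longleftrightarrow> int m dvd (int k - (- int l))"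
    by (rule cong_iff_dvd_diff)
  also have "\<dots> \<longleftrightarrow> int m dvd int (k + l)" by simp
  also have "\<dots> \<longleftrightarrow> m dvd (k + l)" by (rule int_dvd_int_iff)
  finally show ?thesis .
qed

lemma fwd:
  fixes g h :: "'b::comm_ring_1"
  assumes gh: "g*h = 1" and gm: "g^m = 1"
    and c: "[int k = int l] (mod int m) \<or> [int k = - int l] (mod int m)"
  shows "g^k + h^k = g^l + h^l"
proof -
  have hm: "h^m = 1"
  proof -
    have "g^m * h^m = 1" using gh by (metis power_mult_distrib power_one)
    thus ?thesis using gm by simp
  qed
  from c show ?thesis
  proof
    assume "[int k = int l] (mod int m)"
    hence "[k = l] (mod m)" by (simp add: cong_int_iff)
    hence "k mod m = l mod m" by (simp add: cong_def)
    thus ?thesis using pow_mod_eq[OF gm, of k] pow_mod_eq[OF gm, of l]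
      pow_mod_eq[OF hm, of k] pow_mod_eq[OF hm, of l] by simp
  next
    assume "[int k = - int l] (mod int m)"
    hence "m dvd k + l" by (simp add: cong_minus_iff_dvd)
    then obtain c where kl: "k + l = m * c" by blast
    have g1: "g^(k+l) = 1" using gm by (simp add: kl power_mult)
    have h1: "h^(k+l) = 1" using hm by (simp add: kl power_mult)
    have "g^k = g^k * (g*h)^l" using gh by simp
    also have "\<dots> = g^(k+l) * h^l" by (simp add: power_add power_mult_distrib algebra_simps)
    finally have 1: "g^k = h^l" using g1 by simp
    have "h^k = h^k * (g*h)^l" using gh by simp
    also have "\<dots> = h^(k+l) * g^l" by (simp add: power_add power_mult_distrib algebra_simps)
    finally have 2: "h^k = g^l" using h1 by simp
    show ?thesis using 1 2 by (simp add: add.commute)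
  qed
qed

lemma conv:
  fixes g h :: "'b::comm_ring_1"
  assumes nozd: "\<And>a b::'b. a*b = 0 \<Longrightarrow> a = 0 \<or> b = 0"
    and gh: "g*h = 1" and ord: "\<And>n. g^n = 1 \<longleftrightarrow> m dvd n"
    and eq: "g^k + h^k = g^l + h^l"
  shows "[int k = int l] (mod int m) \<or> [int k = - int l] (mod int m)"
proof -
  have a1: "g^(k+l) * h^k = g^l"
  proof -
    have "g^(k+l) * h^k = g^l * (g*h)^k" by (simp add: power_add power_mult_distrib algebra_simps)
    thus ?thesis using gh by simp
  qed
  have a2: "g^(k+l) * h^l = g^k"
  proof -
    have "g^(k+l) * h^l = g^k * (g*h)^l" by (simp add: power_add power_mult_distrib algebra_simps)
    thus ?thesis using gh by simp
  qed
  have "g^(k+l) * (g^k + h^k) = g^(k+l) * (g^l + h^l)" using eq by simp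
  hence "g^(k+l) * g^k + g^l = g^(k+l) * g^l + g^k"
    using a1 a2 by (simp add: distrib_left)
  hence "(g^k - g^l) * (g^(k+l) - 1) = 0"
    by (simp add: algebra_simps)
  hence "g^k - g^l = 0 \<or> g^(k+l) - 1 = 0" using nozd by blast
  thus ?thesis
  proof
    assume "g^(k+l) - 1 = 0"
    hence "m dvd k + l" using ord by simp
    thus ?thesis by (simp add: cong_minus_iff_dvd)
  next
    assume e: "g^k - g^l = 0"
    have gk0: "\<And>j. g^j \<noteq> 0"
    proof
      fix j assume "g^j = 0"
      hence "g^j * h^j = 0" by simp
      moreover have "g^j * h^j = 1" using gh by (metis power_mult_distrib power_one)
      ultimately show False by simp
    qed
    have "m dvd (if k \<le> l then l - k else k - l)"
    proof (cases "k \<le> l")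
      case True
      hence "g^l = g^k * g^(l-k)" by (simp flip: power_add)
      hence "g^k * (g^(l-k) - 1) = 0" using e by (simp add: algebra_simps)
      hence "g^(l-k) = 1" using nozd gk0 by fastforce
      thus ?thesis using ord True by simp
    next
      case False
      hence "g^k = g^l * g^(k-l)" by (simp flip: power_add)
      hence "g^l * (g^(k-l) - 1) = 0" using e by (simp add: algebra_simps)
      hence "g^(k-l) = 1" using nozd gk0 by fastforce
      thus ?thesis using ord False by simp
    qed
    hence "int m dvd int k - int l"
      by (cases "k \<le> l") (auto simp flip: of_nat_diff simp: dvd_diff_commute
          intro: dvd_minus_iff[THEN iffD1])
    hence "[int k = int l] (mod int m)" by (simp add: cong_iff_dvd_diff)
    thus ?thesis by simp
  qed
qed



lemma cyc:
  assumes inv: "\<And>x::'b::{comm_ring_1,finite}. x \<noteq> 0 \<Longrightarrow> \<exists>y. x*y = 1"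
  shows "\<exists>g::'b. (\<forall>n. g^n = 1 \<longleftrightarrow> (CARD('b) - 1) dvd n) \<and> (\<forall>x. x \<noteq> 0 \<longrightarrow> (\<exists>i. x = g^i))"
proof -
  define R :: "'b ring" where "R = \<lparr>carrier = (UNIV::'b set), monoid.mult = (\<lambda>x y. x*y), one = 1, zero = 0, add = (\<lambda>x y. x+y)\<rparr>"
  have nozd: "x*y = 0 \<Longrightarrow> x = 0 \<or> y = 0" for x y :: 'b
    by (metis inv mult.assoc mult.commute mult_1_right mult_zero_right)
  have ai: "\<exists>y. x + y = 0" for x :: 'b using add.right_inverse by blast
  have inv2: "x \<noteq> 0 \<Longrightarrow> \<exists>y. x*y = 1 \<and> y*x = 1" for x :: 'b using inv by (metis mult.commute)
  have fR: "field R"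
    unfolding R_def using ai inv2 nozd
    by unfold_locales (auto simp: algebra_simps Units_def)
  interpret F: field R by (rule fR)
  have pw: "x [^]\<^bsub>R\<^esub> (n::nat) = x ^ n" for x n
    by (induction n) (simp_all add: R_def)
  have one1: "\<one>\<^bsub>R\<^esub> = 1" by (simp add: R_def)
  have finR: "finite (carrier R)" by (simp add: R_def)
  obtain a where a: "a \<in> carrier (mult_of R)" "carrier (mult_of R) = {a[^]\<^bsub>R\<^esub>i | i::nat . i \<in> UNIV}"
    using F.finite_field_mult_group_has_gen[OF finR] by blast
  interpret G: group "mult_of R" by (rule F.field_mult_group)
  have ordR: "order (mult_of R) = CARD('b) - 1"
    using F.order_mult_of[OF finR] by (simp add: order_def R_def)
  define od where "od = G.ord a"
  have peq: "a^n = 1 \<longleftrightarrow> od dvd n" for n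
    using G.pow_eq_id[OF a(1), of n] by (simp add: od_def mult_of_simps pw one1)
  have "od dvd CARD('b) - 1" using G.ord_dvd_group_order[OF a(1)] ordR by (simp add: od_def)
  moreover have "CARD('b) - 1 \<le> od"
  proof -
    have finG: "finite (carrier (mult_of R))" using finR by simp
    have "carrier (mult_of R) = {a[^]\<^bsub>mult_of R\<^esub>x | x. x \<in> {0 .. od - 1}}"
      using G.ord_elems[OF finG a(1)] a(2) by (simp add: od_def mult_of_simps)
    also have "\<dots> = (\<lambda>x. a[^]\<^bsub>mult_of R\<^esub>x) ` {0 .. od - 1}" by blast
    finally have "card (carrier (mult_of R)) \<le> card {0 .. od - 1}"
      by (metis card_image_le finite_atLeastAtMost)
    also have "\<dots> \<le> od" using G.ord_ge_1[OF finG a(1)] by (simp add: od_def)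
    finally show ?thesis using ordR by (simp add: order_def)
  qed
  moreover have "CARD('b) - 1 > 0" using ordR G.order_gt_0_iff_finite finR by simp
  ultimately have oe: "od = CARD('b) - 1"
    by (meson dvd_imp_le le_antisym)
  have "\<forall>x. x \<noteq> 0 \<longrightarrow> (\<exists>i. x = a^i)"
  proof (intro allI impI)
    fix x :: 'b assume "x \<noteq> 0"
    hence "x \<in> carrier (mult_of R)" by (simp add: R_def)
    thus "\<exists>i. x = a^i" using a(2) by (auto simp: pw)
  qed
  thus ?thesis using peq oe by blast
qed



lemma nsq_ns:
  assumes "\<exists>d::'a::comm_ring_1. \<forall>b. d \<noteq> b^2"
  shows "\<forall>b. (nsq::'a) \<noteq> b^2"
  unfolding nsq_def by (rule someI_ex[OF assms])

lemma nrm_nz: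
  fixes z :: "'a::field qext"
  assumes ns: "\<forall>b::'a. nsq \<noteq> b^2" and z: "z \<noteq> 0"
  shows "nrm z \<noteq> 0"
proof
  assume n0: "nrm z = 0"
  show False
  proof (cases "im z = 0")
    case True
    hence "re z \<noteq> 0" using z by (auto simp: qext_eq_iff)
    thus False using n0 True by (simp add: nrm_def)
  next
    case False
    have "re z ^ 2 = nsq * im z ^ 2" using n0 by (simp add: nrm_def)
    hence "nsq = (re z / im z)^2" using False by (simp add: power_divide)
    thus False using ns by blast
  qed
qed

lemma qext_inv:
  fixes z :: "'a::field qext"
  assumes ns: "\<forall>b::'a. nsq \<noteq> b^2" and z: "z \<noteq> 0"
  shows "\<exists>w. z * w = 1"
proof -
  have "z * (Ext (re z) (- im z) * Ext (inverse (nrm z)) 0) = Ext (nrm z) 0 * Ext (inverse (nrm z)) 0"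
    by (simp add: conj_mult flip: mult.assoc)
  also have "\<dots> = 1" using nrm_nz[OF ns z] by (simp add: qext_eq_iff)
  finally show ?thesis by blast
qed

lemma qext_nozd:
  fixes z w :: "'a::field qext"
  assumes ns: "\<forall>b::'a. nsq \<noteq> b^2" and zw: "z * w = 0"
  shows "z = 0 \<or> w = 0"
proof (rule ccontr)
  assume "\<not> (z = 0 \<or> w = 0)"
  then obtain v where "z * v = 1" "w \<noteq> 0" using qext_inv[OF ns] by blast
  hence "w = (z * v) * w" by simp
  also have "\<dots> = 0" using zw by (simp add: algebra_simps)
  finally show False using \<open>w \<noteq> 0\<close> by simp
qed

lemma two_nz:
  assumes "odd CARD('a::{field,finite})"
  shows "(2::'a) \<noteq> 0"
proof
  assume "(2::'a) = 0"
  hence "of_nat 2 = (0::'a)" by simp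
  hence "CHAR('a) dvd 2" by (simp only: of_nat_eq_0_iff_char_dvd)
  moreover have "CHAR('a) \<noteq> Suc 0" by simp
  moreover have "CHAR('a) \<noteq> 0" using finite_imp_CHAR_pos[where ?'a='a] by simp
  ultimately have "CHAR('a) = 2"
    by (metis dvd_imp_le le_antisym less_2_cases not_le zero_less_numeral)
  moreover have "CHAR('a) dvd CARD('a)" by (rule CHAR_dvd_CARD)
  ultimately show False using assms by simp
qed

lemma exists_ns:
  assumes "odd CARD('a::{field,finite})"
  shows "\<exists>d::'a. \<forall>b. d \<noteq> b^2"
proof (rule ccontr)
  assume "\<not> ?thesis"
  hence "surj (\<lambda>b::'a. b^2)" by (metis surjI)
  hence "inj (\<lambda>b::'a. b^2)" by (simp add: finite_UNIV_surj_inj)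
  moreover have "(1::'a)^2 = (-1)^2" by simp
  ultimately have "(1::'a) = -1" by (meson injD)
  hence "(2::'a) = 0" by (metis one_add_one add.right_inverse)
  thus False using two_nz[OF assms] by simp
qed


lemma pow_inj:
  fixes g h :: "'b::comm_ring_1"
  assumes gh: "g*h = 1" and ord: "\<And>n. g^n = 1 \<longleftrightarrow> m dvd n"
  shows "inj_on (\<lambda>i. g^i) {..<m}"
proof -
  have key: "False" if ij: "i < j" "j < m" "g^i = g^j" for i j
  proof -
    have "g^j = g^i * g^(j-i)" using ij(1) by (simp flip: power_add)
    hence "g^i = g^i * g^(j-i)" using ij(3) by simp
    hence "h^i * g^i = h^i * g^i * g^(j-i)" by (simp add: mult.assoc)
    moreover have "h^i * g^i = 1" using gh by (metis mult.commute power_mult_distrib power_one)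
    ultimately have "g^(j-i) = 1" by simp
    hence "m dvd j - i" using ord by simp
    thus False using ij by (meson diff_less_mono2 dvd_imp_le less_imp_diff_less not_le zero_less_diff)
  qed
  show ?thesis
    by (rule inj_onI) (metis key lessThan_iff linorder_neqE_nat)
qed

lemma K_param:
  fixes x y :: "'a::field"
  assumes ns: "\<forall>b::'a. nsq \<noteq> b^2" and n1: "x^2 - nsq*y^2 = 1" and x1: "x \<noteq> -1"
  shows "x = (1 + nsq*(y/(x+1))^2) / (1 - nsq*(y/(x+1))^2)"
proof -
  define s where "s = y/(x+1)"
  define t where "t = nsq*s^2"
  have x10: "x + 1 \<noteq> 0" using x1 by (simp add: eq_neg_iff_add_eq_0)
  have ys: "y = s*(x+1)" using x10 by (simp add: s_def)
  have a1: "(x - 1)*(x+1) = x^2 - 1" by (simp add: power2_eq_square algebra_simps)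
  have a2: "x^2 - 1 = nsq*y^2" using n1 by (simp add: algebra_simps)
  have a3: "nsq*y^2 = (t*(x+1))*(x+1)" by (simp add: ys t_def power2_eq_square)
  have "(x - 1)*(x+1) = (t*(x+1))*(x+1)" using a1 a2 a3 by simp
  hence e: "x - 1 = t*(x+1)" using x10 by simp
  have d: "1 - t \<noteq> 0"
  proof
    assume "1 - t = 0"
    hence t1: "nsq*s^2 = 1" by (simp add: t_def)
    hence "s^2 \<noteq> 0" by auto
    hence "nsq = 1/s^2" using t1 by (simp add: eq_divide_eq)
    hence "nsq = (1/s)^2" by (simp add: power_divide)
    thus False using ns by blast
  qed
  have "x * (1 - t) = 1 + t" using e by (simp add: algebra_simps)
  hence "x = (1 + t) / (1 - t)" using d by (simp add: eq_divide_eq)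
  thus ?thesis by (simp add: s_def t_def)
qed

lemma Sdec_lemma: fixes a b :: "'a::field" assumes two: "(2::'a) \<noteq> 0" and b: "b \<noteq> 0" "a^2 - 4 = b^2"
  shows "((a+b)/2)*((a-b)/2) = 1 \<and> (a+b)/2 + (a-b)/2 = a \<and> (a+b)/2 \<noteq> (a-b)/2"
proof -
  have "(4::'a) = 2*2" by simp
  hence four: "(4::'a) \<noteq> 0" using two by (simp only: mult_eq_0_iff) simp
  have "((a+b)/2)*((a-b)/2) = ((a+b)*(a-b))/4" by simp
  also have "(a+b)*(a-b) = a^2 - b^2" by (simp add: power2_eq_square algebra_simps)
  also have "\<dots> = 4" using b(2) by (simp add: algebra_simps)
  finally have 1: "((a+b)/2)*((a-b)/2) = 1" using four by simp
  have "(a+b)/2 + (a-b)/2 = (a + a)/2" by (simp add: add_divide_distrib[symmetric])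
  also have "a + a = 2*a" by simp
  finally have 2: "(a+b)/2 + (a-b)/2 = a" using two by simp
  have 3: "(a+b)/2 \<noteq> (a-b)/2"
  proof
    assume "(a+b)/2 = (a-b)/2"
    hence e: "a + b = a - b" using two divide_cancel_right by blast
    have "2*b = (a+b) - (a-b)" by (simp add: algebra_simps)
    also have "\<dots> = 0" by (simp only: e diff_self)
    finally have "2*b = 0" .
    thus False using two b(1) by (simp only: mult_eq_0_iff) simp
  qed
  show ?thesis using 1 2 3 by blast
qed

lemma four_nz: assumes "(2::'a::field) \<noteq> 0" shows "(4::'a) \<noteq> 0"
proof -
  have "(4::'a) = 2*2" by simp
  thus ?thesis using assms by (simp only: mult_eq_0_iff) simp
qed

theorem lemma4p3:
  fixes k l :: nat
  assumes "odd CARD('a)"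
  shows "((S_set :: 'a::{field,finite} set) \<noteq> {} \<longrightarrow>
           ((\<forall>a \<in> (S_set :: 'a set). dickson k a = dickson l a) \<longleftrightarrow>
            ([int k = int l] (mod (int CARD('a) - 1)) \<or> [int k = - int l] (mod (int CARD('a) - 1)))))
       \<and> ((\<forall>b \<in> (N_set :: 'a set). dickson k b = dickson l b) \<longleftrightarrow>
            ([int k = int l] (mod (int CARD('a) + 1)) \<or> [int k = - int l] (mod (int CARD('a) + 1))))"
proof -
  define q where "q = CARD('a)"
  have oddq: "odd q" using assms by (simp add: q_def)
  have "card {0::'a, 1} \<le> q" unfolding q_def by (rule card_mono) auto
  hence "q \<ge> 2" by simp
  hence q3: "q \<ge> 3" using oddq by presburger
  have two: "(2::'a) \<noteq> 0" using two_nz[OF assms] .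
  obtain g :: 'a where gord: "\<And>n. g^n = 1 \<longleftrightarrow> (q - 1) dvd n"
      and gall: "\<And>x. x \<noteq> 0 \<Longrightarrow> \<exists>i. x = g^i"
  proof -
    have inva: "\<And>x::'a. x \<noteq> 0 \<Longrightarrow> \<exists>y. x*y = 1" using right_inverse by blast
    show ?thesis using cyc[OF inva] that unfolding q_def by blast
  qed
  have ferm: "x^(q-1) = 1" if nz: "x \<noteq> 0" for x :: 'a
  proof -
    obtain i where "x = g^i" using gall[OF nz] by blast
    hence "x^(q-1) = (g^(q-1))^i" by (simp flip: power_mult add: mult.commute)
    moreover have "g^(q-1) = 1" using gord by simp
    ultimately show ?thesis by simp
  qed
  have ns: "\<forall>b::'a. nsq \<noteq> b^2" using nsq_ns exists_ns[OF assms] by blast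
  have nsq0: "(nsq::'a) \<noteq> 0" using ns by (metis zero_power2)
  obtain G :: "'a qext" where Gord: "\<And>n. G^n = 1 \<longleftrightarrow> (CARD('a qext) - 1) dvd n"
    using cyc[OF qext_inv[OF ns]] by blast
  have cardE: "CARD('a qext) - 1 = (q-1)*(q+1)"
    using card_qext[where ?'a='a] q3 unfolding q_def[symmetric]
    by (cases q) (auto simp: algebra_simps)
  define u0 where "u0 = G^(q-1)"
  have u0ord: "u0^n = 1 \<longleftrightarrow> (q+1) dvd n" for n
  proof -
    have "u0^n = G^((q-1)*n)" by (simp add: u0_def power_mult)
    also have "\<dots> = 1 \<longleftrightarrow> (q-1)*(q+1) dvd (q-1)*n" using Gord cardE by simp
    also have "\<dots> \<longleftrightarrow> (q+1) dvd n" using q3 by (simp only: nat_mult_dvd_cancel_disj) simp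
    finally show ?thesis .
  qed
  have G0: "G \<noteq> 0"
  proof
    assume "G = 0"
    moreover have "G^(CARD('a qext) - 1) = 1" using Gord by simp
    moreover have "CARD('a qext) - 1 > 0" using cardE q3 by simp
    ultimately show False by (simp add: power_0_left)
  qed
  have nrmu0: "nrm u0 = 1"
    using ferm[OF nrm_nz[OF ns G0]] by (simp add: u0_def nrm_power)
  have intm: "int (q - 1) = int q - 1" using q3 by simp

  have Sdec: "\<exists>u v. u*v = 1 \<and> u + v = a \<and> u \<noteq> v" if aS: "a \<in> S_set" for a :: 'a
  proof -
    obtain b where b: "b \<noteq> 0" "a^2 - 4 = b^2" using aS unfolding S_set_def by blast
    show ?thesis using Sdec_lemma[OF two b] by blast
  qed
  have c1: "[int k = int l] (mod (int q - 1)) \<or> [int k = - int l] (mod (int q - 1)) \<longleftrightarrow>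
            [int k = int l] (mod int (q - 1)) \<or> [int k = - int l] (mod int (q - 1))"
    using intm by simp
  have P1: "(S_set :: 'a set) \<noteq> {} \<longrightarrow> ((\<forall>a \<in> (S_set :: 'a set). dickson k a = dickson l a) \<longleftrightarrow>
            ([int k = int l] (mod (int q - 1)) \<or> [int k = - int l] (mod (int q - 1))))"
  proof
    assume "(S_set :: 'a set) \<noteq> {}"
    then obtain a0 :: 'a where "a0 \<in> S_set" by blast
    then obtain u v :: 'a where uv: "u*v = 1" "u \<noteq> v" using Sdec by blast
    have u0: "u \<noteq> 0" using uv by auto
    have fu: "u^(q-1) = 1" using ferm[OF u0] .
    have not2: "\<not> (q-1) dvd 2"
    proof
      assume "(q-1) dvd 2"
      then obtain c where c: "2 = (q-1)*c" by blast
      have "u^2 = u^((q-1)*c)" using arg_cong[OF c, of "\<lambda>n. u^n"] .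
      also have "\<dots> = 1" using fu by (simp add: power_mult)
      finally have uu: "u*u = 1" by (simp add: power2_eq_square)
      have "v = (u*u)*v" using uu by simp
      also have "\<dots> = u*(u*v)" by (simp add: mult.assoc)
      also have "\<dots> = u" using uv(1) by simp
      finally show False using uv(2) by simp
    qed
    have g0: "g \<noteq> 0" using gord[of "q-1"] q3 by (auto simp: power_0_left)
    define h where "h = inverse g"
    have gh: "g * h = 1" using g0 by (simp add: h_def)
    have ghne: "g - h \<noteq> 0"
    proof
      assume "g - h = 0"
      hence gh': "g = h" by simp
      have "g^2 = g*h" by (simp add: power2_eq_square gh')
      hence "g^2 = 1" using gh by simp
      thus False using gord not2 by simp
    qed
    have a0S: "g + h \<in> S_set"
    proof -
      have "(g + h)^2 = (g - h)^2 + 4*(g*h)" by (simp add: power2_eq_square algebra_simps)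
      hence "(g + h)^2 - 4 = (g - h)^2" using gh by simp
      thus ?thesis using ghne unfolding S_set_def by blast
    qed
    show "(\<forall>a \<in> (S_set :: 'a set). dickson k a = dickson l a) \<longleftrightarrow>
            ([int k = int l] (mod (int q - 1)) \<or> [int k = - int l] (mod (int q - 1)))"
      unfolding c1
    proof
      assume all: "\<forall>a \<in> (S_set :: 'a set). dickson k a = dickson l a"
      hence "g^k + h^k = g^l + h^l" using a0S dickson_uv[OF gh] by metis
      thus "[int k = int l] (mod int (q-1)) \<or> [int k = - int l] (mod int (q-1))"
        by (intro conv[OF _ gh gord]) auto
    next
      assume c: "[int k = int l] (mod int (q-1)) \<or> [int k = - int l] (mod int (q-1))"
      show "\<forall>a \<in> (S_set :: 'a set). dickson k a = dickson l a"
      proof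
        fix a :: 'a assume "a \<in> S_set"
        then obtain u v :: 'a where uv: "u*v = 1" "u + v = a" using Sdec by blast
        have "u \<noteq> 0" using uv by auto
        hence "u^(q-1) = 1" using ferm by blast
        hence "u^k + v^k = u^l + v^l" using fwd[OF uv(1) _ c] by blast
        thus "dickson k a = dickson l a" using dickson_uv[OF uv(1)] uv(2) by metis
      qed
    qed
  qed

  have four: "(4::'a) \<noteq> 0" using four_nz[OF two] .
  define K where "K = {z::'a qext. nrm z = 1}"
  have Kfin: "finite K" by simp
  define f where "f z = (if re z = -1 then None else Some (im z / (re z + 1)))" for z :: "'a qext"
  have im0: "im z = 0" if zK: "z \<in> K" and zr: "re z = -1" for z
  proof -
    have "(-1)^2 - nsq * im z ^ 2 = 1" using zK zr by (simp add: K_def nrm_def)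
    hence "nsq * im z ^ 2 = 0" by simp
    thus ?thesis using nsq0 by simp
  qed
  have finj: "inj_on f K"
  proof (rule inj_onI)
    fix z w assume z: "z \<in> K" and w: "w \<in> K" and fe: "f z = f w"
    show "z = w"
    proof (cases "re z = -1")
      case True
      hence wr: "re w = -1" using fe by (auto simp: f_def split: if_splits)
      show ?thesis using True wr im0[OF z True] im0[OF w wr] by (simp add: qext_eq_iff)
    next
      case False
      hence wf: "re w \<noteq> -1" using fe by (auto simp: f_def split: if_splits)
      have se: "im z / (re z + 1) = im w / (re w + 1)" using fe False wf by (simp add: f_def)
      have nz: "re z ^ 2 - nsq * im z ^ 2 = 1" using z by (simp add: K_def nrm_def)
      have nw: "re w ^ 2 - nsq * im w ^ 2 = 1" using w by (simp add: K_def nrm_def)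
      have rz: "re z = (1 + nsq*(im z/(re z+1))^2) / (1 - nsq*(im z/(re z+1))^2)"
        by (rule K_param[OF ns nz False])
      have rw: "re w = (1 + nsq*(im w/(re w+1))^2) / (1 - nsq*(im w/(re w+1))^2)"
        by (rule K_param[OF ns nw wf])
      have re: "re z = re w" using rz rw se by metis
      have z1: "re z + 1 \<noteq> 0" using False by (simp add: eq_neg_iff_add_eq_0)
      have "im z = (im z / (re z + 1)) * (re z + 1)" using z1 by simp
      also have "\<dots> = (im w / (re w + 1)) * (re w + 1)" by (subst se) (simp only: re)
      also have "\<dots> = im w" using z1 re by simp
      finally show ?thesis using re by (simp add: qext_eq_iff)
    qed
  qed
  have cardK: "card K \<le> q + 1"
  proof -
    have "card K \<le> card (UNIV :: 'a option set)"
      by (rule card_inj_on_le[OF finj]) auto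
    thus ?thesis by (simp add: q_def)
  qed
  define v0 where "v0 = Ext (re u0) (- im u0)"
  have uv0: "u0 * v0 = 1" using conj_mult[of u0] nrmu0 by (simp add: v0_def qext_eq_iff)
  define H where "H = (\<lambda>j. u0^j) ` {..<q+1}"
  have HK: "H \<subseteq> K" by (auto simp: H_def K_def nrm_power nrmu0)
  have cardH: "card H = q + 1"
    unfolding H_def by (subst card_image[OF pow_inj[OF uv0 u0ord]]) simp
  have HeqK: "H = K" using card_seteq[OF Kfin HK] cardK cardH by simp
  have Kpow: "z^(q+1) = 1" if zK: "z \<in> K" for z
  proof -
    obtain j where "z = u0^j" using zK HeqK by (auto simp: H_def)
    hence "z^(q+1) = (u0^(q+1))^j" by (metis power_mult mult.commute)
    moreover have "u0^(q+1) = 1" using u0ord[of "q+1"] by (simp only: dvd_refl)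
    ultimately show ?thesis by simp
  qed
  have sq_odd: "\<exists>t. x = g^(2*t+1)" if nz: "x \<noteq> 0" and nsx: "\<forall>b. x \<noteq> b^2" for x
  proof -
    obtain i where i: "x = g^i" using gall[OF nz] by blast
    show ?thesis
    proof (cases "even i")
      case True
      then obtain t where "i = 2*t" by blast
      hence "x = (g^t)^2" using i by (simp add: power_mult mult.commute)
      thus ?thesis using nsx by blast
    next
      case False
      then obtain t where "i = 2*t+1" using oddE by blast
      thus ?thesis using i by blast
    qed
  qed
  have c2: "[int k = int l] (mod (int q + 1)) \<or> [int k = - int l] (mod (int q + 1)) \<longleftrightarrow>
            [int k = int l] (mod int (q + 1)) \<or> [int k = - int l] (mod int (q + 1))"
    by (simp only: of_nat_add of_nat_1)
  have P2: "(\<forall>b \<in> (N_set :: 'a set). dickson k b = dickson l b) \<longleftrightarrow>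
            ([int k = int l] (mod (int q + 1)) \<or> [int k = - int l] (mod (int q + 1)))"
    unfolding c2
  proof
    assume all: "\<forall>b \<in> (N_set :: 'a set). dickson k b = dickson l b"
    define x y where "x = re u0" and "y = im u0"
    have n: "x^2 - nsq*y^2 = 1" using nrmu0 by (simp add: x_def y_def nrm_def)
    have y0: "y \<noteq> 0"
    proof
      assume y0: "y = 0"
      hence "x*x = 1" using n by (simp add: power2_eq_square)
      moreover have "re (u0*u0) = x*x + nsq*y*y" by (simp add: x_def y_def)
      moreover have "im (u0*u0) = x*y + y*x" by (simp add: x_def y_def)
      ultimately have "u0*u0 = 1" using y0 by (simp add: qext_eq_iff)
      hence "u0^2 = 1" by (simp add: power2_eq_square)
      hence "(q+1) dvd 2" using u0ord by blast
      thus False using q3 using dvd_imp_le[of "q+1" 2] by simp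
    qed
    have aN: "2*x \<in> N_set"
    proof -
      have "(2*x)^2 - 4 = 4*(x^2 - 1)" by (simp add: power2_eq_square algebra_simps)
      also have "x^2 - 1 = nsq*y^2" using n by (simp add: algebra_simps)
      finally have e4: "(2*x)^2 - 4 = 4*(nsq*y^2)" .
      have "\<not> (\<exists>b. (2*x)^2 - 4 = b^2)"
      proof
        assume "\<exists>b. (2*x)^2 - 4 = b^2"
        then obtain b where b: "4*(nsq*y^2) = b^2" using e4 by metis
        have y2: "4*y^2 \<noteq> 0" using y0 four by simp
        have "(b/(2*y))^2 = b^2/(4*y^2)" by (simp add: power_divide power_mult_distrib)
        also have "\<dots> = (4*y^2)*nsq/(4*y^2)" using b by (simp add: algebra_simps)
        also have "\<dots> = nsq" using y2 by simp
        finally show False using ns by metis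
      qed
      thus ?thesis by (simp add: N_set_def)
    qed
    have r1: "re (u0 + v0) = 2*x" by (simp add: v0_def x_def)
    have i1: "im (u0 + v0) = 0" by (simp add: v0_def)
    have sum0: "u0 + v0 = Ext (2*x) 0" using r1 i1 by (simp add: qext_eq_iff)
    have dk: "dickson k (2*x) = dickson l (2*x)" using all aN by blast
    have "dickson k (u0 + v0) = Ext (dickson k (2*x)) 0" by (simp only: sum0 dickson_emb)
    also have "\<dots> = Ext (dickson l (2*x)) 0" by (simp only: dk)
    also have "\<dots> = dickson l (u0 + v0)" by (simp only: sum0 dickson_emb)
    finally have "dickson k (u0 + v0) = dickson l (u0 + v0)" .
    hence "u0^k + v0^k = u0^l + v0^l" by (simp add: dickson_uv[OF uv0])
    thus "[int k = int l] (mod int (q+1)) \<or> [int k = - int l] (mod int (q+1))"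
      by (intro conv[OF _ uv0 u0ord]) (use qext_nozd[OF ns] in auto)
  next
    assume c: "[int k = int l] (mod int (q+1)) \<or> [int k = - int l] (mod int (q+1))"
    show "\<forall>b \<in> (N_set :: 'a set). dickson k b = dickson l b"
    proof
      fix a :: 'a assume aN: "a \<in> N_set"
      define cc where "cc = (a^2 - 4)/4"
      have cc4: "a^2 - 4 = 4*cc" using four by (simp add: cc_def)
      have ccns: "\<forall>b. cc \<noteq> b^2"
      proof
        fix b show "cc \<noteq> b^2"
        proof
          assume "cc = b^2"
          hence "a^2 - 4 = (2*b)^2" using cc4 by (simp add: power2_eq_square)
          thus False using aN unfolding N_set_def by blast
        qed
      qed
      have cc0: "cc \<noteq> 0" using ccns by (metis zero_power2)
      obtain i where i: "cc = g^(2*i+1)" using sq_odd[OF cc0 ccns] by blast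
      obtain j where j: "nsq = g^(2*j+1)" using sq_odd[OF nsq0 ns] by blast
      define s where "s = g^(i+j+1)"
      have ex: "(2*i+1) + (2*j+1) = (i+j+1)*2" by simp
      have csq: "cc * nsq = s^2"
        by (simp only: i j s_def power_add[symmetric] ex power_mult)
      define y where "y = s / nsq"
      have "nsq * y^2 = s^2 / nsq" using nsq0 by (simp add: y_def power2_eq_square)
      also have "\<dots> = cc" using nsq0 by (simp flip: csq)
      finally have ny: "nsq * y^2 = cc" .
      define u where "u = Ext (a/2) y"
      define v where "v = Ext (a/2) (-y)"
      have "nrm u = (a/2)^2 - cc" using ny by (simp add: u_def nrm_def)
      also have "\<dots> = a^2/4 - (a^2 - 4)/4" by (simp add: cc_def power_divide)
      also have "\<dots> = 4/4" by (simp add: diff_divide_distrib[symmetric])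
      also have "\<dots> = 1" using four by simp
      finally have nu: "nrm u = 1" .
      have uv: "u * v = 1" using conj_mult[of u] nu by (simp add: u_def v_def qext_eq_iff)
      have "a/2 + a/2 = (1+1)*(a/2)" by (simp only: distrib_right mult_1_left)
      also have "\<dots> = 2*(a/2)" by (simp only: one_add_one)
      also have "\<dots> = a" using two by simp
      finally have "a/2 + a/2 = a" .
      hence upv: "u + v = Ext a 0" by (simp add: u_def v_def qext_eq_iff)
      have "u \<in> K" using nu by (simp add: K_def)
      hence "u^(q+1) = 1" by (rule Kpow)
      hence "u^k + v^k = u^l + v^l" using fwd[OF uv _ c] by blast
      hence "Ext (dickson k a) 0 = Ext (dickson l a) 0"
        by (simp add: dickson_uv[OF uv] flip: upv dickson_emb)
      thus "dickson k a = dickson l a" by simp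
    qed
  qed
  show ?thesis using P1 P2 by (simp add: q_def)
qed

end
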